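(* Let $n\geq2$ and define $\tilde f:[2,\infty)\to\mathbb{R}$ by \[ \tilde f(x)=\frac{n+1-2x-x(x+n-2)+\frac1n(x^2-x)}{n-1-x(x+n-2)}. \] If $\bar x\geq2$ satisfies $\tilde f'(\bar x)=0$, then $\tilde f''(\bar x)<0$; i.e. every critical point of $\tilde f$ in $[2,\infty)$ is a strict local maximum. *)

theory Defs
  imports "HOL-Analysis.Analysis"
begin

text \<open>The defining formula is used on all of the reals; its denominator is nonzero on [2,oo),
  so on a neighbourhood of [2,oo) it is smooth and derivatives there agree with
  (one-sided at 2) derivatives of the restriction to [2,oo).\<close>
definition ftilde :: "nat \<Rightarrow> real \<Rightarrow> real" where
  "ftilde n x =
     (real n + 1 - 2 * x - x * (x + real n - 2) + (1 / real n) * (x ^ 2 - x))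
     / (real n - 1 - x * (x + real n - 2))"

end

theory Submission
  imports Defs
begin

definition NN :: "nat \<Rightarrow> real \<Rightarrow> real" where
  "NN n x = real n + 1 - 2 * x - x * (x + real n - 2) + (1 / real n) * (x ^ 2 - x)"
definition DD :: "nat \<Rightarrow> real \<Rightarrow> real" where
  "DD n x = real n - 1 - x * (x + real n - 2)"
definition N1 :: "nat \<Rightarrow> real \<Rightarrow> real" where
  "N1 n x = - real n - 2 * x + (1 / real n) * (2 * x - 1)"
definition D1 :: "nat \<Rightarrow> real \<Rightarrow> real" where
  "D1 n x = - (2 * x + real n - 2)"
definition PP :: "nat \<Rightarrow> real \<Rightarrow> real" where
  "PP n x = N1 n x * DD n x - NN n x * D1 n x"
definition P1 :: "nat \<Rightarrow> real \<Rightarrow> real" where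
  "P1 n x = 2 * (1 / real n - 1) * DD n x + 2 * NN n x"

lemma ft_eq: "ftilde n = (\<lambda>x. NN n x / DD n x)"
  by (auto simp: ftilde_def NN_def DD_def)

lemma hasN: "(NN n has_real_derivative N1 n x) (at x)"
  unfolding NN_def[abs_def] N1_def
  by (cases "n = 0") (auto intro!: derivative_eq_intros simp: field_simps)

lemma hasD: "(DD n has_real_derivative D1 n x) (at x)"
  unfolding DD_def[abs_def] D1_def
  by (cases "n = 0") (auto intro!: derivative_eq_intros simp: field_simps)

lemma hasN1: "(N1 n has_real_derivative 2 * (1 / real n - 1)) (at x)"
  unfolding N1_def[abs_def]
  by (cases "n = 0") (auto intro!: derivative_eq_intros simp: field_simps)

lemma hasD1: "(D1 n has_real_derivative -2) (at x)"
  unfolding D1_def[abs_def]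
  by (cases "n = 0") (auto intro!: derivative_eq_intros simp: field_simps)

lemma hasP: "(PP n has_real_derivative P1 n x) (at x)"
proof -
  have "(PP n has_real_derivative
     (2 * (1 / real n - 1) * DD n x + N1 n x * D1 n x - (N1 n x * D1 n x + NN n x * -2))) (at x)"
    unfolding PP_def[abs_def]
    using DERIV_diff[OF DERIV_mult[OF hasN1[of n x] hasD[of n x]] DERIV_mult[OF hasN[of n x] hasD1[of n x]]]
    by (simp add: algebra_simps)
  then show ?thesis by (simp add: P1_def algebra_simps)
qed

lemma hasF: "DD n x \<noteq> 0 \<Longrightarrow> (ftilde n has_real_derivative PP n x / (DD n x)^2) (at x)"
  unfolding ft_eq
  using DERIV_divide[OF hasN hasD]
  by (simp add: PP_def power2_eq_square)

lemma DD_neg: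
  fixes n :: nat and x :: real
  assumes a1: "n \<ge> 2" and a2: "x \<ge> 2"
  shows "DD n x < 0"
proof -
  have h: "x + real n - 2 \<ge> real n" using a2 by simp
  have "x * (x + real n - 2) \<ge> 2 * (x + real n - 2)"
    using a2 h by (intro mult_right_mono) auto
  moreover have "2 * real n \<le> 2 * (x + real n - 2)" using h by simp
  ultimately have "x * (x + real n - 2) \<ge> 2 * real n" by (rule order_trans[rotated])
  then show ?thesis using a1 by (simp add: DD_def)
qed

theorem lemma4p1:
  fixes n :: nat and xbar :: real
  assumes "n \<ge> 2"
    and "xbar \<ge> 2"
    and "deriv (ftilde n) xbar = 0"
  shows "deriv (deriv (ftilde n)) xbar < 0"
proof -
  let ?S = "{x. DD n x < 0}"
  have opS: "open ?S"
    unfolding DD_def by (intro open_Collect_less continuous_intros)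
  have inS: "xbar \<in> ?S" using DD_neg[OF assms(1,2)] by simp
  have eqS: "\<forall>x\<in>?S. PP n x / (DD n x)^2 = deriv (ftilde n) x"
    using hasF by (auto intro!: DERIV_imp_deriv[symmetric])
  have Dne: "DD n xbar \<noteq> 0" using inS by simp
  have P0: "PP n xbar = 0"
    using assms(3) DERIV_imp_deriv[OF hasF[OF Dne]] Dne by simp
  have "((\<lambda>x. PP n x / (DD n x * DD n x)) has_real_derivative
      (P1 n xbar * (DD n xbar * DD n xbar) - PP n xbar * (D1 n xbar * DD n xbar + DD n xbar * D1 n xbar)) / ((DD n xbar * DD n xbar) * (DD n xbar * DD n xbar))) (at xbar)"
    using DERIV_divide[OF hasP[of n xbar] DERIV_mult[OF hasD[of n xbar] hasD[of n xbar]]] Dne by simp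
  then have "((\<lambda>x. PP n x / (DD n x)^2) has_real_derivative
      (P1 n xbar * (DD n xbar * DD n xbar) - PP n xbar * (D1 n xbar * DD n xbar + DD n xbar * D1 n xbar)) / ((DD n xbar * DD n xbar) * (DD n xbar * DD n xbar))) (at xbar)"
    by (simp only: power2_eq_square)
  moreover have "(P1 n xbar * (DD n xbar * DD n xbar) - PP n xbar * (D1 n xbar * DD n xbar + DD n xbar * D1 n xbar)) / ((DD n xbar * DD n xbar) * (DD n xbar * DD n xbar))
     = P1 n xbar / (DD n xbar)^2"
    using P0 Dne by (simp add: power2_eq_square)
  ultimately have "((\<lambda>x. PP n x / (DD n x)^2) has_real_derivative P1 n xbar / (DD n xbar)^2) (at xbar)"
    by simp
  then have "(deriv (ftilde n) has_real_derivative P1 n xbar / (DD n xbar)^2) (at xbar)"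
    by (rule has_field_derivative_transform_within_open[OF _ opS inS]) (use eqS in auto)
  then have "deriv (deriv (ftilde n)) xbar = P1 n xbar / (DD n xbar)^2"
    by (rule DERIV_imp_deriv)
  moreover have "P1 n xbar < 0"
  proof -
    have np: "real n > 0" using assms(1) by simp
    have "P1 n xbar = 2 * (3 - 1 / real n) * (1 - xbar)"
      unfolding P1_def DD_def NN_def using np by (simp add: algebra_simps power2_eq_square add_divide_distrib[symmetric])
    moreover have "3 - 1 / real n > 0" using assms(1) by (simp add: field_simps)
    ultimately show ?thesis using assms(2) by (simp add: mult_pos_neg)
  qed
  moreover have "(DD n xbar)^2 > 0" using Dne by simp
  ultimately show ?thesis by (simp add: divide_neg_pos)
qed

end
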